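(* Let $m,n$ be positive integers and let $R$ be an $m\times n$ rectangular permutation matrix. Then $\frac{1}{2}(R+R^\pi)$ is an extreme point of $\Gamma^\pi_{m,n}$ if and only if one of the following holds: (i) $m$ is even and $R$ is a centrosymmetric rectangular permutation matrix; (ii) $m$ is odd and $\tilde R$ is an $(m-1)\times n$ centrosymmetric rectangular permutation matrix, where $\tilde R$ is the matrix obtained from $R$ by deleting its center row (the $\frac{m+1}{2}$-th row).
   Context: A real $m\times n$ matrix is stochastic if its entries are nonnegative and each row sums to $1$. For $A=(a_{i,j})\in M_{p,n}$, $A^\pi$ is the $p\times n$ matrix with $(A^\pi)_{i,j}=a_{p+1-i,n+1-j}$; $A$ is centrosymmetric if $A=A^\pi$. $\Gamma^\pi_{m,n}$ is the convex set of $m\times n$ centrosymmetric stochastic matrices. A rectangular permutation matrix is a $(0,1)$-matrix with exactly one $1$ in each row. *)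

theory Defs
  imports "HOL-Analysis.Analysis"
begin

text \<open>An m x n real matrix is represented as a function nat => nat => real, with
  rows indexed by 0..<m and columns by 0..<n (0-based); entries outside this range
  are required to be 0 so that each matrix has a unique representative.\<close>

definition is_mat :: "nat \<Rightarrow> nat \<Rightarrow> (nat \<Rightarrow> nat \<Rightarrow> real) \<Rightarrow> bool" where
  "is_mat m n A \<longleftrightarrow> (\<forall>i j. \<not> (i < m \<and> j < n) \<longrightarrow> A i j = 0)"

definition stochastic :: "nat \<Rightarrow> nat \<Rightarrow> (nat \<Rightarrow> nat \<Rightarrow> real) \<Rightarrow> bool" where
  "stochastic m n A \<longleftrightarrow> is_mat m n A \<and>
     (\<forall>i<m. \<forall>j<n. 0 \<le> A i j) \<and> (\<forall>i<m. (\<Sum>j<n. A i j) = 1)"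

text \<open>A^pi: (A^pi)_{i,j} = a_{p+1-i, n+1-j}, in 0-based indexing a_{p-1-i, n-1-j}.\<close>
definition pi_mat :: "nat \<Rightarrow> nat \<Rightarrow> (nat \<Rightarrow> nat \<Rightarrow> real) \<Rightarrow> (nat \<Rightarrow> nat \<Rightarrow> real)" where
  "pi_mat m n A = (\<lambda>i j. if i < m \<and> j < n then A (m - 1 - i) (n - 1 - j) else 0)"

definition centrosymmetric :: "nat \<Rightarrow> nat \<Rightarrow> (nat \<Rightarrow> nat \<Rightarrow> real) \<Rightarrow> bool" where
  "centrosymmetric m n A \<longleftrightarrow> is_mat m n A \<and> A = pi_mat m n A"

definition Gamma_pi :: "nat \<Rightarrow> nat \<Rightarrow> (nat \<Rightarrow> nat \<Rightarrow> real) set" where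
  "Gamma_pi m n = {A. stochastic m n A \<and> centrosymmetric m n A}"

definition rect_perm :: "nat \<Rightarrow> nat \<Rightarrow> (nat \<Rightarrow> nat \<Rightarrow> real) \<Rightarrow> bool" where
  "rect_perm m n R \<longleftrightarrow> is_mat m n R \<and>
     (\<forall>i<m. \<forall>j<n. R i j = 0 \<or> R i j = 1) \<and>
     (\<forall>i<m. \<exists>!j. j < n \<and> R i j = 1)"

definition extreme_mat :: "(nat \<Rightarrow> nat \<Rightarrow> real) \<Rightarrow> (nat \<Rightarrow> nat \<Rightarrow> real) set \<Rightarrow> bool" where
  "extreme_mat X S \<longleftrightarrow> X \<in> S \<and>
     (\<forall>A\<in>S. \<forall>B\<in>S. \<forall>t::real. 0 < t \<and> t < 1 \<and>
        X = (\<lambda>i j. t * A i j + (1 - t) * B i j) \<longrightarrow> A = B)"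

text \<open>Deleting the centre row (row (m+1)/2 in 1-based indexing, i.e. row m div 2 in
  0-based indexing, for odd m) yields an (m-1) x n matrix.\<close>
definition del_center_row :: "nat \<Rightarrow> nat \<Rightarrow> (nat \<Rightarrow> nat \<Rightarrow> real) \<Rightarrow> (nat \<Rightarrow> nat \<Rightarrow> real)" where
  "del_center_row m n R = (\<lambda>i j. if i < m - 1 \<and> j < n
       then (if i < m div 2 then R i j else R (i + 1) j) else 0)"

end

theory Submission
  imports Defs
begin

lemma pi_is_mat: "is_mat m n (pi_mat m n A)"
  by (simp add: is_mat_def pi_mat_def)

lemma pi_pi: "is_mat m n A \<Longrightarrow> pi_mat m n (pi_mat m n A) = A"
  unfolding pi_mat_def is_mat_def by (rule ext, rule ext) auto

lemma pi_app: "i < m \<Longrightarrow> j < n \<Longrightarrow> pi_mat m n A i j = A (m - 1 - i) (n - 1 - j)"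
  by (simp add: pi_mat_def)

lemma sum_rev: "(\<Sum>j<(n::nat). f (n - 1 - j)) = (\<Sum>j<n. (f j::real))"
proof -
  have "(\<Sum>j<n. f (n - 1 - j)) = (\<Sum>j<n. f (n - Suc j))" by simp
  also have "\<dots> = (\<Sum>j<n. f j)" by (rule sum.nat_diff_reindex)
  finally show ?thesis .
qed

lemma pi_stoch: "stochastic m n A \<Longrightarrow> stochastic m n (pi_mat m n A)"
  unfolding stochastic_def
proof (intro conjI allI impI)
  assume H: "is_mat m n A \<and> (\<forall>i<m. \<forall>j<n. 0 \<le> A i j) \<and> (\<forall>i<m. (\<Sum>j<n. A i j) = 1)"
  show "is_mat m n (pi_mat m n A)" by (rule pi_is_mat)
  fix i assume i: "i < m"
  then have i': "m - 1 - i < m" by arith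
  { fix j assume "j < n"
    then show "0 \<le> pi_mat m n A i j" using H i i' by (simp add: pi_app) }
  have "(\<Sum>j<n. pi_mat m n A i j) = (\<Sum>j<n. A (m - 1 - i) (n - 1 - j))"
    by (rule sum.cong) (auto simp: pi_app i)
  also have "\<dots> = (\<Sum>j<n. A (m - 1 - i) j)" by (rule sum_rev)
  also have "\<dots> = 1" using H i' by blast
  finally show "(\<Sum>j<n. pi_mat m n A i j) = 1" .
qed

lemma stoch_le1: "stochastic m n A \<Longrightarrow> i < m \<Longrightarrow> j < n \<Longrightarrow> A i j \<le> 1"
proof -
  assume H: "stochastic m n A" "i < m" "j < n"
  have "A i j \<le> (\<Sum>j<n. A i j)"
    by (rule member_le_sum) (use H in \<open>auto simp: stochastic_def\<close>)
  then show ?thesis using H by (simp add: stochastic_def)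
qed

lemma sum_one: "(\<forall>j<(n::nat). j \<noteq> a \<longrightarrow> f j = 0) \<Longrightarrow> a < n \<Longrightarrow> (\<Sum>j<n. f j) = (f a::real)"
proof -
  assume H: "\<forall>j<n. j \<noteq> a \<longrightarrow> f j = 0" "a < n"
  have "(\<Sum>j<n. f j) = (\<Sum>j<n. if j = a then f a else 0)"
    by (rule sum.cong) (use H in auto)
  also have "\<dots> = f a" using H(2) by (subst sum.delta) auto
  finally show ?thesis .
qed

lemma sum_two: "(\<forall>j<(n::nat). j \<noteq> a \<and> j \<noteq> b \<longrightarrow> f j = 0) \<Longrightarrow> a < n \<Longrightarrow> b < n \<Longrightarrow> a \<noteq> b
   \<Longrightarrow> (\<Sum>j<n. f j) = (f a + f b::real)"
proof -
  assume H: "\<forall>j<n. j \<noteq> a \<and> j \<noteq> b \<longrightarrow> f j = 0" "a < n" "b < n" "a \<noteq> b"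
  have "(\<Sum>j<n. f j) = (\<Sum>j<n. (if j = a then f a else 0) + (if j = b then f b else 0))"
    by (rule sum.cong) (use H in auto)
  also have "\<dots> = f a + f b" using H(2,3) by (simp add: sum.distrib)
  finally show ?thesis .
qed

lemma rp_row: "rect_perm m n R \<Longrightarrow> i < m \<Longrightarrow> \<exists>a<n. R i a = 1 \<and> (\<forall>j<n. j \<noteq> a \<longrightarrow> R i j = 0)"
  unfolding rect_perm_def by metis

lemma rp_stoch: "rect_perm m n R \<Longrightarrow> stochastic m n R"
  unfolding stochastic_def
proof (intro conjI allI impI)
  assume H: "rect_perm m n R"
  then show "is_mat m n R" by (simp add: rect_perm_def)
  fix i assume i: "i < m"
  { fix j assume "j < n" then show "0 \<le> R i j" using H i unfolding rect_perm_def by force }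
  obtain a where a: "a < n" "R i a = 1" "\<forall>j<n. j \<noteq> a \<longrightarrow> R i j = 0" using rp_row[OF H i] by blast
  show "(\<Sum>j<n. R i j) = 1" using sum_one[of n a "R i"] a by simp
qed


definition Xm :: "nat \<Rightarrow> nat \<Rightarrow> (nat \<Rightarrow> nat \<Rightarrow> real) \<Rightarrow> (nat \<Rightarrow> nat \<Rightarrow> real)" where
  "Xm m n R = (\<lambda>i j. (1/2) * (R i j + pi_mat m n R i j))"

lemma Xm_in: assumes "stochastic m n R" shows "Xm m n R \<in> Gamma_pi m n"
proof -
  have S: "stochastic m n (pi_mat m n R)" by (rule pi_stoch[OF assms])
  have im: "is_mat m n R" using assms by (simp add: stochastic_def)
  have st: "stochastic m n (Xm m n R)"
    unfolding stochastic_def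
  proof (intro conjI allI impI)
    show "is_mat m n (Xm m n R)" using im pi_is_mat[of m n R]
      by (simp add: is_mat_def Xm_def)
    fix i assume i: "i < m"
    { fix j assume "j < n" then show "0 \<le> Xm m n R i j"
        using assms S i by (simp add: stochastic_def Xm_def) }
    have "(\<Sum>j<n. Xm m n R i j) = (1/2) * ((\<Sum>j<n. R i j) + (\<Sum>j<n. pi_mat m n R i j))"
      by (subst sum.distrib[symmetric], subst sum_distrib_left, simp add: Xm_def)
    then show "(\<Sum>j<n. Xm m n R i j) = 1" using assms S i by (simp add: stochastic_def)
  qed
  have "pi_mat m n (Xm m n R) = Xm m n R"
  proof (rule ext, rule ext)
    fix i j
    show "pi_mat m n (Xm m n R) i j = Xm m n R i j"
    proof (cases "i < m \<and> j < n")
      case True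
      then have "pi_mat m n (Xm m n R) i j = Xm m n R (m - 1 - i) (n - 1 - j)" by (simp add: pi_app)
      also have "\<dots> = (1/2) * (R (m - 1 - i) (n - 1 - j) + R i j)"
        using True by (simp add: Xm_def pi_app diff_diff_cancel)
      also have "\<dots> = Xm m n R i j" using True by (simp add: Xm_def pi_app)
      finally show ?thesis .
    next
      case False
      then show ?thesis using im by (auto simp: pi_mat_def Xm_def is_mat_def)
    qed
  qed
  then show ?thesis using st by (simp add: Gamma_pi_def centrosymmetric_def stochastic_def)
qed


lemma zero_comb: "0 \<le> (a::real) \<Longrightarrow> 0 \<le> b \<Longrightarrow> 0 < t \<Longrightarrow> t < 1 \<Longrightarrow> t * a + (1 - t) * b = 0 \<Longrightarrow> a = 0"
proof -
  assume H: "0 \<le> a" "0 \<le> b" "0 < t" "t < 1" "t * a + (1 - t) * b = 0"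
  have "0 \<le> t * a" "0 \<le> (1 - t) * b" using H by simp_all
  then have "t * a = 0" using H(5) by linarith
  then show ?thesis using H(3) by simp
qed

lemma ext_dir:
  assumes rp: "rect_perm m n R"
    and C: "\<forall>i<m. \<forall>j<n. i \<noteq> m - 1 - i \<longrightarrow> R i j = R (m - 1 - i) (n - 1 - j)"
    and A: "A \<in> Gamma_pi m n" and B: "B \<in> Gamma_pi m n" and t: "0 < t" "t < 1"
    and X: "Xm m n R = (\<lambda>i j. t * A i j + (1 - t) * B i j)"
  shows "A = Xm m n R"
proof (rule ext, rule ext)
  fix i j
  have Ast: "stochastic m n A" and Bst: "stochastic m n B" and Acs: "A = pi_mat m n A"
    using A B by (auto simp: Gamma_pi_def centrosymmetric_def)
  have Rst: "stochastic m n R" by (rule rp_stoch[OF rp])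
  have Xin: "Xm m n R \<in> Gamma_pi m n" by (rule Xm_in[OF Rst])
  show "A i j = Xm m n R i j"
  proof (cases "i < m \<and> j < n")
    case False
    then show ?thesis using Ast Xin by (auto simp: stochastic_def is_mat_def Gamma_pi_def)
  next
    case True
    then have i: "i < m" and j: "j < n" by auto
    have Xe: "\<And>j. Xm m n R i j = t * A i j + (1 - t) * B i j" using X by metis
    have Xv: "\<And>j. j < n \<Longrightarrow> Xm m n R i j = (1/2) * (R i j + R (m - 1 - i) (n - 1 - j))"
      using i by (simp add: Xm_def pi_app)
    have zero: "\<And>j. j < n \<Longrightarrow> Xm m n R i j = 0 \<Longrightarrow> A i j = 0"
    proof -
      fix j assume j: "j < n" and "Xm m n R i j = 0"
      then have "t * A i j + (1 - t) * B i j = 0" using Xe by simp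
      then show "A i j = 0" using zero_comb[of "A i j" "B i j" t] Ast Bst i j t
        by (simp add: stochastic_def)
    qed
    have rs: "(\<Sum>j<n. A i j) = 1" using Ast i by (simp add: stochastic_def)
    obtain a where a: "a < n" "R i a = 1" "\<forall>j<n. j \<noteq> a \<longrightarrow> R i j = 0" using rp_row[OF rp i] by blast
    show ?thesis
    proof (cases "i = m - 1 - i")
      case False
      have Xr: "\<And>j. j < n \<Longrightarrow> Xm m n R i j = R i j"
      proof -
        fix j assume jn: "j < n"
        have "R i j = R (m - 1 - i) (n - 1 - j)" using C i False jn by blast
        then show "Xm m n R i j = R i j" using Xv[OF jn] by simp
      qed
      have "\<forall>j<n. j \<noteq> a \<longrightarrow> A i j = 0" using zero Xr a by simp
      then have "A i a = 1" using sum_one[of n a "A i"] a rs by simp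
      then show ?thesis using Xr a j zero by (cases "j = a") auto
    next
      case True
      have Xc: "\<And>j. j < n \<Longrightarrow> Xm m n R i j = (1/2) * (R i j + R i (n - 1 - j))"
        using Xv True by metis
      have Asym: "\<And>j. j < n \<Longrightarrow> A i j = A i (n - 1 - j)"
      proof -
        fix j assume "j < n"
        then have "A i j = pi_mat m n A i j" using Acs by metis
        also have "\<dots> = A i (n - 1 - j)" using i \<open>j < n\<close> True by (metis pi_app)
        finally show "A i j = A i (n - 1 - j)" .
      qed
      define a' where "a' = n - 1 - a"
      have a': "a' < n" "n - 1 - a' = a" using a unfolding a'_def by auto
      have off: "\<forall>j<n. j \<noteq> a \<and> j \<noteq> a' \<longrightarrow> A i j = 0"
      proof (intro allI impI)
        fix k assume hk: "k < n" "k \<noteq> a \<and> k \<noteq> a'"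
        then have k1: "k < n" "k \<noteq> a" "n - 1 - k \<noteq> a" "n - 1 - k < n" unfolding a'_def by auto
        then have k2: "R i k = 0" "R i (n - 1 - k) = 0" using a(3) by blast+
        have "Xm m n R i k = 0" using Xc[OF k1(1)] k2 by simp
        then show "A i k = 0" using zero[OF k1(1)] by simp
      qed
      have Xz: "Xm m n R i j = 0" if "j \<noteq> a" "j \<noteq> a'"
      proof -
        have "n - 1 - j \<noteq> a" using j that unfolding a'_def by auto
        moreover have "n - 1 - j < n" using j by arith
        ultimately have "R i j = 0" "R i (n - 1 - j) = 0" using a(3) j that by blast+
        then show "Xm m n R i j = 0" using Xc[OF j] by simp
      qed
      have Xa: "Xm m n R i a = (1/2) * (R i a + R i a')" using Xc[OF a(1)] unfolding a'_def by simp
      have Xa': "Xm m n R i a' = (1/2) * (R i a' + R i a)" using Xc[OF a'(1)] a'(2) by simp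
      show ?thesis
      proof (cases "a = a'")
        case True
        have "\<forall>j<n. j \<noteq> a \<longrightarrow> A i j = 0" using off True by simp
        then have "A i a = 1" using sum_one[of n a "A i"] a rs by simp
        moreover have "Xm m n R i a = 1" using Xa a(2) True by simp
        moreover have "j \<noteq> a \<Longrightarrow> A i j = 0" using off j True by blast
        moreover have "j \<noteq> a \<Longrightarrow> Xm m n R i j = 0" using Xz True by blast
        ultimately show ?thesis by (cases "j = a") auto
      next
        case False
        have "A i a + A i a' = 1" using sum_two[of n a a' "A i"] off a(1) a'(1) False rs by simp
        moreover have "A i a = A i a'" using Asym[OF a'(1)] a'(2) by simp
        ultimately have h: "A i a = 1/2" "A i a' = 1/2" by auto
        have r0: "R i a' = 0" using a(3) a'(1) False by blast
        have "Xm m n R i a = 1/2" using Xa a(2) r0 by simp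
        moreover have "Xm m n R i a' = 1/2" using Xa' a(2) r0 by simp
        moreover have "j \<noteq> a \<Longrightarrow> j \<noteq> a' \<Longrightarrow> A i j = 0" using off j by blast
        ultimately show ?thesis using h Xz by (cases "j = a"; cases "j = a'") auto
      qed
    qed
  qed
qed


lemma nonext_dir:
  assumes rp: "rect_perm m n R"
    and E: "extreme_mat (Xm m n R) (Gamma_pi m n)"
  shows "\<forall>i<m. \<forall>j<n. i \<noteq> m - 1 - i \<longrightarrow> R i j = R (m - 1 - i) (n - 1 - j)"
proof (rule ccontr)
  assume "\<not> ?thesis"
  then obtain i j where i: "i < m" and j: "j < n" and ik: "i \<noteq> m - 1 - i"
    and ne: "R i j \<noteq> R (m - 1 - i) (n - 1 - j)" by blast
  define k where "k = m - 1 - i"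
  have kk: "m - 1 - i = k" unfolding k_def by simp
  have k: "k < m" "m - 1 - k = i" "k \<noteq> i" using i ik unfolding k_def by auto
  have Rst: "stochastic m n R" by (rule rp_stoch[OF rp])
  have PRst: "stochastic m n (pi_mat m n R)" by (rule pi_stoch[OF Rst])
  have Xin: "Xm m n R \<in> Gamma_pi m n" by (rule Xm_in[OF Rst])
  have Xst: "stochastic m n (Xm m n R)" and Xcs: "Xm m n R = pi_mat m n (Xm m n R)"
    using Xin by (auto simp: Gamma_pi_def centrosymmetric_def)
  define A where "A = (\<lambda>r c. if r < m \<and> c < n then (if r = i then R i c else if r = k then pi_mat m n R k c
      else Xm m n R r c) else 0)"
  define B where "B = (\<lambda>r c. if r < m \<and> c < n then (if r = i then pi_mat m n R i c else if r = k then R k c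
      else Xm m n R r c) else 0)"
  have rowsum: "\<And>F. stochastic m n F \<Longrightarrow> r < m \<Longrightarrow> (\<Sum>c<n. F r c) = 1" for r
    by (simp add: stochastic_def)
  have nonneg: "\<And>F. stochastic m n F \<Longrightarrow> r < m \<Longrightarrow> c < n \<Longrightarrow> 0 \<le> F r c" for r c
    by (simp add: stochastic_def)
  have Ast: "stochastic m n A"
    unfolding stochastic_def
  proof (intro conjI allI impI)
    show "is_mat m n A" by (simp add: A_def is_mat_def)
    fix r assume r: "r < m"
    { fix c assume c: "c < n"
      show "0 \<le> A r c" using nonneg[OF Rst r c] nonneg[OF PRst r c] nonneg[OF Xst r c] r c
        by (cases "r = i"; cases "r = k") (auto simp: A_def) }
    have "(\<Sum>c<n. A r c) = (\<Sum>c<n. (if r = i then R r c else if r = k then pi_mat m n R r c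
      else Xm m n R r c))" by (rule sum.cong) (auto simp: A_def r)
    also have "\<dots> = 1" using rowsum[OF Rst r] rowsum[OF PRst r] rowsum[OF Xst r] by (cases "r = i"; cases "r = k") simp_all
    finally show "(\<Sum>c<n. A r c) = 1" .
  qed
  have Bst: "stochastic m n B"
    unfolding stochastic_def
  proof (intro conjI allI impI)
    show "is_mat m n B" by (simp add: B_def is_mat_def)
    fix r assume r: "r < m"
    { fix c assume c: "c < n"
      show "0 \<le> B r c" using nonneg[OF Rst r c] nonneg[OF PRst r c] nonneg[OF Xst r c] r c
        by (cases "r = i"; cases "r = k") (auto simp: B_def) }
    have "(\<Sum>c<n. B r c) = (\<Sum>c<n. (if r = i then pi_mat m n R r c else if r = k then R r c
      else Xm m n R r c))" by (rule sum.cong) (auto simp: B_def r)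
    also have "\<dots> = 1" using rowsum[OF Rst r] rowsum[OF PRst r] rowsum[OF Xst r] by (cases "r = i"; cases "r = k") simp_all
    finally show "(\<Sum>c<n. B r c) = 1" .
  qed
  have Xsym: "\<And>r c. r < m \<Longrightarrow> c < n \<Longrightarrow> Xm m n R (m - 1 - r) (n - 1 - c) = Xm m n R r c"
    by (metis Xcs pi_app)
  have Ppi: "\<And>r c. r < m \<Longrightarrow> c < n \<Longrightarrow> pi_mat m n R r c = R (m - 1 - r) (n - 1 - c)"
    by (rule pi_app)
  have Acs: "A = pi_mat m n A"
  proof (rule ext, rule ext)
    fix r c
    show "A r c = pi_mat m n A r c"
    proof (cases "r < m \<and> c < n")
      case False then show ?thesis by (auto simp: A_def pi_mat_def)
    next
      case True
      then have r: "r < m" and c: "c < n" by auto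
      have r': "m - 1 - r < m" and c': "n - 1 - c < n" and cc: "n - 1 - (n - 1 - c) = c"
        and rr: "m - 1 - (m - 1 - r) = r" using r c by auto
      have "pi_mat m n A r c = A (m - 1 - r) (n - 1 - c)" using r c by (rule pi_app)
      also have "\<dots> = A r c"
      proof (cases "r = i")
        case True
        then have "m - 1 - r = k" unfolding k_def by simp
        then show ?thesis using True k c c' cc Ppi[OF k(1) c'] r by (simp add: A_def)
      next
        case ri: False
        show ?thesis
        proof (cases "r = k")
          case True
          then have "m - 1 - r = i" using k by simp
          then show ?thesis using True k c c' cc Ppi[OF k(1) c] i by (simp add: A_def)
        next
          case False
          then have "m - 1 - r \<noteq> i" "m - 1 - r \<noteq> k" using ri rr k r unfolding k_def by auto
          then show ?thesis using False ri r' c' r c Xsym[OF r c] by (simp add: A_def)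
        qed
      qed
      finally show ?thesis by simp
    qed
  qed
  have Bcs: "B = pi_mat m n B"
  proof (rule ext, rule ext)
    fix r c
    show "B r c = pi_mat m n B r c"
    proof (cases "r < m \<and> c < n")
      case False then show ?thesis by (auto simp: B_def pi_mat_def)
    next
      case True
      then have r: "r < m" and c: "c < n" by auto
      have r': "m - 1 - r < m" and c': "n - 1 - c < n" and cc: "n - 1 - (n - 1 - c) = c"
        and rr: "m - 1 - (m - 1 - r) = r" using r c by auto
      have "pi_mat m n B r c = B (m - 1 - r) (n - 1 - c)" using r c by (rule pi_app)
      also have "\<dots> = B r c"
      proof (cases "r = i")
        case True
        then have "m - 1 - r = k" unfolding k_def by simp
        then show ?thesis using True k c c' cc Ppi[OF i c] r by (simp add: B_def)
      next
        case ri: False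
        show ?thesis
        proof (cases "r = k")
          case True
          then have "m - 1 - r = i" using k by simp
          then show ?thesis using True k c c' cc Ppi[OF i c'] i kk by (simp add: B_def)
        next
          case False
          then have "m - 1 - r \<noteq> i" "m - 1 - r \<noteq> k" using ri rr k r unfolding k_def by auto
          then show ?thesis using False ri r' c' r c Xsym[OF r c] by (simp add: B_def)
        qed
      qed
      finally show ?thesis by simp
    qed
  qed
  have AG: "A \<in> Gamma_pi m n" using Ast Acs by (simp add: Gamma_pi_def centrosymmetric_def stochastic_def)
  have BG: "B \<in> Gamma_pi m n" using Bst Bcs by (simp add: Gamma_pi_def centrosymmetric_def stochastic_def)
  have Xeq: "Xm m n R = (\<lambda>r c. (1/2) * A r c + (1 - 1/2) * B r c)"
  proof (rule ext, rule ext)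
    fix r c
    show "Xm m n R r c = (1/2) * A r c + (1 - 1/2) * B r c"
    proof (cases "r < m \<and> c < n")
      case False
      then show ?thesis using Xst by (auto simp: A_def B_def stochastic_def is_mat_def)
    next
      case True
      then have r: "r < m" and c: "c < n" by auto
      show ?thesis
      proof (cases "r = i")
        case True then show ?thesis using r c by (simp add: A_def B_def Xm_def)
      next
        case False
        show ?thesis
        proof (cases "r = k")
          case True
          have "pi_mat m n R k c = R i (n - 1 - c)" using Ppi[OF k(1) c] k by simp
          moreover have "pi_mat m n R i c = R k (n - 1 - c)" using Ppi[OF i c] unfolding k_def by simp
          ultimately show ?thesis using True False r c k by (simp add: A_def B_def Xm_def)
        next
          case False
          then show ?thesis using \<open>r \<noteq> i\<close> r c by (simp add: A_def B_def)
        qed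
      qed
    qed
  qed
  have "\<forall>A\<in>Gamma_pi m n. \<forall>B\<in>Gamma_pi m n. \<forall>t::real. 0 < t \<and> t < 1 \<and>
        Xm m n R = (\<lambda>i j. t * A i j + (1 - t) * B i j) \<longrightarrow> A = B"
    using E unfolding extreme_mat_def by blast
  then have "0 < (1/2::real) \<and> (1/2::real) < 1 \<and> Xm m n R = (\<lambda>r c. (1/2) * A r c + (1 - 1/2) * B r c) \<longrightarrow> A = B"
    using AG BG by blast
  then have "A = B" using Xeq by simp
  then have "A i j = B i j" by simp
  then have "R i j = R k (n - 1 - j)" using i j Ppi[OF i j] kk by (simp add: A_def B_def)
  then show False using ne unfolding k_def by simp
qed


lemma cs_iff: "is_mat p n A \<Longrightarrow> centrosymmetric p n A \<longleftrightarrow> (\<forall>i<p. \<forall>j<n. A i j = A (p - 1 - i) (n - 1 - j))"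
  unfolding centrosymmetric_def
proof safe
  fix i j assume "A = pi_mat p n A" "i < p" "j < n"
  then show "A i j = A (p - 1 - i) (n - 1 - j)" by (metis pi_app)
next
  assume im: "is_mat p n A" and H: "\<forall>i<p. \<forall>j<n. A i j = A (p - 1 - i) (n - 1 - j)"
  show "A = pi_mat p n A"
  proof (rule ext, rule ext)
    fix i j show "A i j = pi_mat p n A i j"
    proof (cases "i < p \<and> j < n")
      case True
      then have "A i j = A (p - 1 - i) (n - 1 - j)" using H by blast
      then show ?thesis using True by (simp add: pi_app)
    next
      case False
      then show ?thesis using im by (auto simp: pi_mat_def is_mat_def)
    qed
  qed
qed

lemma even_C:
  assumes "is_mat m n R" "even m"
  shows "(\<forall>i<m. \<forall>j<n. i \<noteq> m - 1 - i \<longrightarrow> R i j = R (m - 1 - i) (n - 1 - j)) \<longleftrightarrow> centrosymmetric m n R"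
proof -
  have "\<And>i. i < m \<Longrightarrow> i \<noteq> m - 1 - i" using assms(2) by presburger
  then show ?thesis unfolding cs_iff[OF assms(1)] by blast
qed

definition fidx :: "nat \<Rightarrow> nat \<Rightarrow> nat" where "fidx c i = (if i < c then i else Suc i)"

lemma del_app: "odd m \<Longrightarrow> i < m - 1 \<Longrightarrow> j < n \<Longrightarrow> del_center_row m n R i j = R (fidx (m div 2) i) j"
  by (simp add: del_center_row_def fidx_def)

lemma oddE': "odd (m::nat) \<Longrightarrow> \<exists>c. m = 2 * c + 1 \<and> m div 2 = c" by presburger
lemma fidx_rev: assumes "odd m" "i < m - 1" shows "fidx (m div 2) (m - 1 - 1 - i) = m - 1 - fidx (m div 2) i"
proof - obtain c where "m = 2 * c + 1" "m div 2 = c" using oddE'[OF assms(1)] by blast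
  then show ?thesis using assms(2) unfolding fidx_def by auto qed
lemma fidx_lt: assumes "odd m" "i < m - 1" shows "fidx (m div 2) i < m"
proof - obtain c where "m = 2 * c + 1" "m div 2 = c" using oddE'[OF assms(1)] by blast
  then show ?thesis using assms(2) unfolding fidx_def by auto qed
lemma fidx_ne: assumes "odd m" "i < m - 1" shows "fidx (m div 2) i \<noteq> m - 1 - fidx (m div 2) i"
proof - obtain c where "m = 2 * c + 1" "m div 2 = c" using oddE'[OF assms(1)] by blast
  then show ?thesis using assms(2) unfolding fidx_def by auto qed
lemma fidx_aux: assumes "odd m" "i < m" "i \<noteq> m - 1 - i" "\<not> i < m div 2" shows "i - 1 < m - 1 \<and> fidx (m div 2) (i - 1) = i"
proof - obtain c where "m = 2 * c + 1" "m div 2 = c" using oddE'[OF assms(1)] by blast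
  then show ?thesis using assms(2-) unfolding fidx_def by auto qed

lemma fidx_surj: "odd m \<Longrightarrow> i < m \<Longrightarrow> i \<noteq> m - 1 - i \<Longrightarrow> \<exists>i'<m - 1. fidx (m div 2) i' = i"
proof -
  assume H: "odd m" "i < m" "i \<noteq> m - 1 - i"
  show ?thesis
  proof (cases "i < m div 2")
    case True
    then show ?thesis using H by (intro exI[of _ i]) (auto simp: fidx_def)
  next
    case False
    then have "i - 1 < m - 1" "fidx (m div 2) (i - 1) = i" using fidx_aux[OF H] by auto
    then show ?thesis by blast
  qed
qed

lemma odd_C:
  assumes "odd m"
  shows "(\<forall>i<m. \<forall>j<n. i \<noteq> m - 1 - i \<longrightarrow> R i j = R (m - 1 - i) (n - 1 - j)) \<longleftrightarrow>
     centrosymmetric (m - 1) n (del_center_row m n R)"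
proof -
  have im: "is_mat (m - 1) n (del_center_row m n R)" by (simp add: is_mat_def del_center_row_def)
  have eq: "centrosymmetric (m - 1) n (del_center_row m n R) \<longleftrightarrow>
     (\<forall>i<m - 1. \<forall>j<n. R (fidx (m div 2) i) j = R (m - 1 - fidx (m div 2) i) (n - 1 - j))"
  proof -
    have hD: "\<And>i j. i < m - 1 \<Longrightarrow> j < n \<Longrightarrow>
       del_center_row m n R (m - 1 - 1 - i) (n - 1 - j) = R (m - 1 - fidx (m div 2) i) (n - 1 - j)"
    proof -
      fix i j assume ij: "i < m - 1" "j < n"
      then have "m - 1 - 1 - i < m - 1" "n - 1 - j < n" by auto
      then show "del_center_row m n R (m - 1 - 1 - i) (n - 1 - j) = R (m - 1 - fidx (m div 2) i) (n - 1 - j)"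
        using del_app[OF assms] fidx_rev[OF assms ij(1)] by simp
    qed
    have hD0: "\<And>i j. i < m - 1 \<Longrightarrow> j < n \<Longrightarrow> del_center_row m n R i j = R (fidx (m div 2) i) j"
      using del_app[OF assms] by blast
    show ?thesis unfolding cs_iff[OF im]
    proof safe
      fix i j assume H: "\<forall>i<m - 1. \<forall>j<n. del_center_row m n R i j = del_center_row m n R (m - 1 - 1 - i) (n - 1 - j)"
        and ij: "i < m - 1" "j < n"
      have "del_center_row m n R i j = del_center_row m n R (m - 1 - 1 - i) (n - 1 - j)" using H ij by blast
      then show "R (fidx (m div 2) i) j = R (m - 1 - fidx (m div 2) i) (n - 1 - j)" using hD[OF ij] hD0[OF ij] by simp
    next
      fix i j assume H: "\<forall>i<m - 1. \<forall>j<n. R (fidx (m div 2) i) j = R (m - 1 - fidx (m div 2) i) (n - 1 - j)"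
        and ij: "i < m - 1" "j < n"
      have "R (fidx (m div 2) i) j = R (m - 1 - fidx (m div 2) i) (n - 1 - j)" using H ij by blast
      then show "del_center_row m n R i j = del_center_row m n R (m - 1 - 1 - i) (n - 1 - j)" using hD[OF ij] hD0[OF ij] by simp
    qed
  qed
  show ?thesis
    unfolding eq
  proof safe
    fix i j assume C: "\<forall>i<m. \<forall>j<n. i \<noteq> m - 1 - i \<longrightarrow> R i j = R (m - 1 - i) (n - 1 - j)"
      and ij: "i < m - 1" "j < n"
    show "R (fidx (m div 2) i) j = R (m - 1 - fidx (m div 2) i) (n - 1 - j)"
      using C fidx_lt[OF assms ij(1)] fidx_ne[OF assms ij(1)] ij(2) by blast
  next
    fix i j assume D: "\<forall>i<m - 1. \<forall>j<n. R (fidx (m div 2) i) j = R (m - 1 - fidx (m div 2) i) (n - 1 - j)"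
      and ij: "i < m" "j < n" "i \<noteq> m - 1 - i"
    obtain i' where "i' < m - 1" "fidx (m div 2) i' = i" using fidx_surj[OF assms ij(1) ij(3)] by blast
    then show "R i j = R (m - 1 - i) (n - 1 - j)" using D ij(2) by blast
  qed
qed

lemma del_rp: assumes "odd m" "rect_perm m n R" shows "rect_perm (m - 1) n (del_center_row m n R)"
  unfolding rect_perm_def
proof (intro conjI allI impI)
  show "is_mat (m - 1) n (del_center_row m n R)" by (simp add: is_mat_def del_center_row_def)
  fix i assume i: "i < m - 1"
  have fi: "fidx (m div 2) i < m" by (rule fidx_lt[OF assms(1) i])
  { fix j assume j: "j < n"
    show "del_center_row m n R i j = 0 \<or> del_center_row m n R i j = 1"
      using assms(2) fi j del_app[OF assms(1) i j] unfolding rect_perm_def by simp }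
  have "\<exists>!j. j < n \<and> R (fidx (m div 2) i) j = 1" using assms(2) fi unfolding rect_perm_def by blast
  moreover have "\<And>j. (j < n \<and> del_center_row m n R i j = 1) \<longleftrightarrow> (j < n \<and> R (fidx (m div 2) i) j = 1)"
    using del_app[OF assms(1) i] by auto
  ultimately show "\<exists>!j. j < n \<and> del_center_row m n R i j = 1" by simp
qed

theorem mainTheorem4:
  fixes m n :: nat and R :: "nat \<Rightarrow> nat \<Rightarrow> real"
  assumes "0 < m" and "0 < n"
    and "rect_perm m n R"
  shows "extreme_mat (\<lambda>i j. (1/2) * (R i j + pi_mat m n R i j)) (Gamma_pi m n) \<longleftrightarrow>
    ((even m \<and> rect_perm m n R \<and> centrosymmetric m n R) \<or>
     (odd m \<and> rect_perm (m - 1) n (del_center_row m n R) \<and>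
        centrosymmetric (m - 1) n (del_center_row m n R)))"
proof -
  let ?C = "\<forall>i<m. \<forall>j<n. i \<noteq> m - 1 - i \<longrightarrow> R i j = R (m - 1 - i) (n - 1 - j)"
  have rp: "rect_perm m n R" by (rule assms(3))
  have im: "is_mat m n R" using rp by (simp add: rect_perm_def)
  have Xdef: "(\<lambda>i j. (1/2) * (R i j + pi_mat m n R i j)) = Xm m n R" by (simp add: Xm_def)
  have "extreme_mat (Xm m n R) (Gamma_pi m n) \<longleftrightarrow> ?C"
  proof
    assume "extreme_mat (Xm m n R) (Gamma_pi m n)"
    then show ?C by (rule nonext_dir[OF rp])
  next
    assume C: ?C
    show "extreme_mat (Xm m n R) (Gamma_pi m n)"
      unfolding extreme_mat_def
    proof (intro conjI ballI allI impI)
      show "Xm m n R \<in> Gamma_pi m n" by (rule Xm_in[OF rp_stoch[OF rp]])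
      fix A B and t :: real
      assume A: "A \<in> Gamma_pi m n" and B: "B \<in> Gamma_pi m n"
        and H: "0 < t \<and> t < 1 \<and> Xm m n R = (\<lambda>i j. t * A i j + (1 - t) * B i j)"
      have 1: "A = Xm m n R" using ext_dir[OF rp C A B] H by blast
      have "Xm m n R = (\<lambda>i j. (1 - t) * B i j + (1 - (1 - t)) * A i j)"
        using H by (simp add: algebra_simps)
      then have 2: "B = Xm m n R" using ext_dir[OF rp C B A, of "1 - t"] H by simp
      show "A = B" using 1 2 by simp
    qed
  qed
  moreover have "even m \<Longrightarrow> ?C \<longleftrightarrow> centrosymmetric m n R" using even_C[OF im] by blast
  moreover have "odd m \<Longrightarrow> ?C \<longleftrightarrow> centrosymmetric (m - 1) n (del_center_row m n R)" using odd_C by blast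
  ultimately show ?thesis unfolding Xdef using rp del_rp[OF _ rp] by blast
qed

end
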